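(* Let $j^\star=\left\lfloor-\frac{\log(1-\lambda)}{\log(\lambda d+1)}\right\rfloor$, assume $I>j^\star$, and let $x^\star$ be the unique fixed point. Then $\mathcal L_M(x^\star)=\mathcal L_S(x^\star)+\frac1d$ and $$j^\star-\frac1d\le\mathcal L_S(x^\star)\le j^\star-\frac1d+1.$$
   Context: Fix $\lambda\in(0,1)$, an integer $d\ge2$ and an integer $I>1$. $\mathcal S=\{x=(x_{i,j})_{0\le i\le j\le I}: x_{i,j}\ge0,\ \sum_{i=0}^I\sum_{j=i}^I x_{i,j}=1\}$; $x_{i,\cdot}=\sum_{j=i}^I x_{i,j}$, $x_{\cdot,j}=\sum_{i=0}^j x_{i,j}$; $\mathcal L_S(x)=\sum_{i=1}^I i\,x_{i,\cdot}$, $\mathcal L_M(x)=\sum_{j=1}^I j\,x_{\cdot,j}$. For $0\le j\le I$: $\mathcal R_j(x)=\max\{0,\lambda(1-d\sum_{i=0}^j(j+1-i)x_{i,\cdot})\}\,\mathbf 1\{\sum_{i=0}^j x_{\cdot,i}=0\}$, $\mathcal G_j(x)=\lambda d\,\mathbf 1\{\sum_{i=0}^j x_{\cdot,i}=0,\ d\sum_{i=0}^j(j+1-i)x_{i,\cdot}\le1\}\sum_{i=0}^j x_{i,\cdot}$. Write $\rho_k^{a,b}(x)=\mathcal R_k(x)\frac{x_{a,b}}{x_{\cdot,b}}\mathbf 1\{x_{\cdot,b}>0\}$ (equal to $0$ when $x_{\cdot,b}=0$). The drift $b(x)$ is: $b_{0,0}=\lambda d(x_{0,\cdot}-x_{0,0})-\lambda+\mathcal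 R_0(x)$; for $i<j$: $b_{i,j}=x_{i+1,j}-\mathbf 1\{i>0\}x_{i,j}-\lambda d x_{i,j}-\rho_{j-1}^{i,j}+\mathbf 1\{i>0\}\rho_{j-2}^{i-1,j-1}+\mathbf 1\{j=I,i>0\}\rho_{I-1}^{i-1,I}$; $b_{1,1}=-x_{1,1}+\lambda d(x_{1,\cdot}-x_{1,1})+\lambda-\mathcal R_0(x)-\rho_0^{1,1}-\mathcal G_1(x)$; for $2\le i\le I-1$: $b_{i,i}=-x_{i,i}+\lambda d(x_{i,\cdot}-x_{i,i})-\rho_{i-1}^{i,i}+\rho_{i-2}^{i-1,i-1}+\mathcal G_{i-1}(x)-\mathcal G_i(x)$; $b_{I,I}=-x_{I,I}+\rho_{I-2}^{I-1,I-1}+\mathcal G_{I-1}(x)+\rho_{I-1}^{I-1,I}$. A fluid solution is an absolutely continuous $x:\mathbb R_+\to\mathcal S$ with $\dot x_{i,j}(t)=b_{i,j}(x(t))$ for a.e. $t$ and all $i\le j$. A fixed point is a fluid solution with $b(x(t))=0$ for all $t\ge0$ (hence constant, identified with a point of $\mathcal S$). *)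

theory Defs
  imports Complex_Main
begin

text \<open>States are functions x :: nat => nat => real; only the entries x i j with
  0 <= i <= j <= I are meaningful.\<close>

definition inS :: "nat \<Rightarrow> (nat \<Rightarrow> nat \<Rightarrow> real) \<Rightarrow> bool" where
  "inS I x \<longleftrightarrow> (\<forall>i j. i \<le> j \<longrightarrow> j \<le> I \<longrightarrow> 0 \<le> x i j)
                 \<and> (\<Sum>i=0..I. \<Sum>j=i..I. x i j) = 1"

definition rowsum :: "nat \<Rightarrow> (nat \<Rightarrow> nat \<Rightarrow> real) \<Rightarrow> nat \<Rightarrow> real" where
  "rowsum I x i = (\<Sum>j=i..I. x i j)"

definition colsum :: "(nat \<Rightarrow> nat \<Rightarrow> real) \<Rightarrow> nat \<Rightarrow> real" where
  "colsum x j = (\<Sum>i=0..j. x i j)"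

definition LS :: "nat \<Rightarrow> (nat \<Rightarrow> nat \<Rightarrow> real) \<Rightarrow> real" where
  "LS I x = (\<Sum>i=1..I. real i * rowsum I x i)"

definition LM :: "nat \<Rightarrow> (nat \<Rightarrow> nat \<Rightarrow> real) \<Rightarrow> real" where
  "LM I x = (\<Sum>j=1..I. real j * colsum x j)"

definition Rf :: "real \<Rightarrow> nat \<Rightarrow> nat \<Rightarrow> (nat \<Rightarrow> nat \<Rightarrow> real) \<Rightarrow> nat \<Rightarrow> real" where
  "Rf lam d I x j =
     (if (\<Sum>i=0..j. colsum x i) = 0
      then max 0 (lam * (1 - real d * (\<Sum>i=0..j. (real j + 1 - real i) * rowsum I x i)))
      else 0)"

definition Gf :: "real \<Rightarrow> nat \<Rightarrow> nat \<Rightarrow> (nat \<Rightarrow> nat \<Rightarrow> real) \<Rightarrow> nat \<Rightarrow> real" where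
  "Gf lam d I x j =
     (if (\<Sum>i=0..j. colsum x i) = 0
         \<and> real d * (\<Sum>i=0..j. (real j + 1 - real i) * rowsum I x i) \<le> 1
      then lam * real d * (\<Sum>i=0..j. rowsum I x i)
      else 0)"

definition rho :: "real \<Rightarrow> nat \<Rightarrow> nat \<Rightarrow> (nat \<Rightarrow> nat \<Rightarrow> real) \<Rightarrow> nat \<Rightarrow> nat \<Rightarrow> nat \<Rightarrow> real" where
  "rho lam d I x k a b =
     (if colsum x b > 0 then Rf lam d I x k * x a b / colsum x b else 0)"

definition drift :: "real \<Rightarrow> nat \<Rightarrow> nat \<Rightarrow> (nat \<Rightarrow> nat \<Rightarrow> real) \<Rightarrow> nat \<Rightarrow> nat \<Rightarrow> real" where
  "drift lam d I x i j =
    (if i = 0 \<and> j = 0 then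
       lam * real d * (rowsum I x 0 - x 0 0) - lam + Rf lam d I x 0
     else if i < j then
       x (i+1) j - (if i > 0 then x i j else 0) - lam * real d * x i j
       - rho lam d I x (j-1) i j
       + (if i > 0 then rho lam d I x (j-2) (i-1) (j-1) else 0)
       + (if j = I \<and> i > 0 then rho lam d I x (I-1) (i-1) I else 0)
     else if i = 1 \<and> j = 1 then
       - x 1 1 + lam * real d * (rowsum I x 1 - x 1 1) + lam - Rf lam d I x 0
       - rho lam d I x 0 1 1 - Gf lam d I x 1
     else if i = j \<and> 2 \<le> i \<and> i \<le> I - 1 then
       - x i i + lam * real d * (rowsum I x i - x i i)
       - rho lam d I x (i-1) i i + rho lam d I x (i-2) (i-1) (i-1)
       + Gf lam d I x (i-1) - Gf lam d I x i
     else if i = I \<and> j = I then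
       - x I I + rho lam d I x (I-2) (I-1) (I-1) + Gf lam d I x (I-1)
       + rho lam d I x (I-1) (I-1) I
     else 0)"

definition fixed_point :: "real \<Rightarrow> nat \<Rightarrow> nat \<Rightarrow> (nat \<Rightarrow> nat \<Rightarrow> real) \<Rightarrow> bool" where
  "fixed_point lam d I x \<longleftrightarrow> inS I x \<and>
     (\<forall>i j. i \<le> j \<longrightarrow> j \<le> I \<longrightarrow> drift lam d I x i j = 0)"

definition jstar :: "real \<Rightarrow> nat \<Rightarrow> int" where
  "jstar lam d = \<lfloor>- ln (1 - lam) / ln (lam * real d + 1)\<rfloor>"

end

theory Submission
  imports Defs
begin



lemma drift_00: "drift lam d I x 0 0 = lam * real d * (rowsum I x 0 - x 0 0) - lam + Rf lam d I x 0"
  unfolding drift_def by simp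

lemma drift_off: "i < j \<Longrightarrow> drift lam d I x i j =
   x (i+1) j - (if i > 0 then x i j else 0) - lam * real d * x i j
       - rho lam d I x (j-1) i j
       + (if i > 0 then rho lam d I x (j-2) (i-1) (j-1) else 0)
       + (if j = I \<and> i > 0 then rho lam d I x (I-1) (i-1) I else 0)"
  unfolding drift_def by (simp only: if_not_P[of "i = 0 \<and> j = 0"] if_P) simp_all

lemma drift_11: "drift lam d I x 1 1 =
       - x 1 1 + lam * real d * (rowsum I x 1 - x 1 1) + lam - Rf lam d I x 0
       - rho lam d I x 0 1 1 - Gf lam d I x 1"
  unfolding drift_def by simp

lemma drift_mid: "2 \<le> i \<Longrightarrow> i \<le> I - 1 \<Longrightarrow> drift lam d I x i i =
       - x i i + lam * real d * (rowsum I x i - x i i)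
       - rho lam d I x (i-1) i i + rho lam d I x (i-2) (i-1) (i-1)
       + Gf lam d I x (i-1) - Gf lam d I x i"
  unfolding drift_def by simp

lemma drift_II: "1 < I \<Longrightarrow> drift lam d I x I I =
       - x I I + rho lam d I x (I-2) (I-1) (I-1) + Gf lam d I x (I-1)
       + rho lam d I x (I-1) (I-1) I"
proof -
  assume "1 < I"
  then have "\<not> I \<le> I - 1" "I \<noteq> 1" by simp_all
  then show ?thesis unfolding drift_def by simp
qed



lemma sum_prefix:
  fixes f :: "nat \<Rightarrow> real"
  shows "(\<Sum>i<n. \<Sum>k\<le>i. f k) = (\<Sum>k<n. (real n - real k) * f k)"
proof (induction n)
  case 0 then show ?case by simp
next
  case (Suc n)
  have "(\<Sum>k<Suc n. (real (Suc n) - real k) * f k)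
      = (\<Sum>k<Suc n. (real n - real k) * f k + f k)"
    by (rule sum.cong) (auto simp: algebra_simps)
  also have "\<dots> = (\<Sum>k<n. (real n - real k) * f k) + (\<Sum>k\<le>n. f k)"
    by (simp add: sum.distrib flip: lessThan_Suc_atMost)
  finally show ?case using Suc by simp
qed

lemma down_zero:
  fixes f :: "nat \<Rightarrow> real"
  assumes "\<forall>i<n. c * f i \<le> f (Suc i)" "c > 0" "\<forall>i\<le>n. 0 \<le> f i" "f n = 0"
  shows "\<forall>i\<le>n. f i = 0"
  using assms
proof (induction n)
  case 0 then show ?case by simp
next
  case (Suc n)
  have h1: "c * f n \<le> f (Suc n)" using Suc.prems(1) by blast
  have h2: "0 \<le> f n" using Suc.prems(3) by simp
  have h3: "0 \<le> c * f n" using h2 Suc.prems(2) by simp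
  have "c * f n = 0" using h1 h3 Suc.prems(4) by linarith
  then have fn: "f n = 0" using Suc.prems(2) by simp
  have p1: "\<forall>i<n. c * f i \<le> f (Suc i)" using Suc.prems(1) by simp
  have p3: "\<forall>i\<le>n. 0 \<le> f i" using Suc.prems(3) by simp
  have "\<forall>i\<le>n. f i = 0" using Suc.IH[OF p1 Suc.prems(2) p3 fn] .
  then show ?case using Suc.prems(4) le_Suc_eq by blast
qed

locale fp =
  fixes lam :: real and d I :: nat and x :: "nat \<Rightarrow> nat \<Rightarrow> real"
  assumes lam0: "0 < lam" and lam1: "lam < 1" and d2: "2 \<le> d" and I1: "1 < I"
    and fpt: "fixed_point lam d I x"
begin

lemma inS: "inS I x" using fpt unfolding fixed_point_def by (rule conjunct1)

lemma dr_all: "\<forall>i j. i \<le> j \<longrightarrow> j \<le> I \<longrightarrow> drift lam d I x i j = 0"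
  using fpt unfolding fixed_point_def by (rule conjunct2)

lemma nonneg: "i \<le> j \<Longrightarrow> j \<le> I \<Longrightarrow> 0 \<le> x i j"
  using inS unfolding inS_def by blast

lemma total: "(\<Sum>i=0..I. \<Sum>j=i..I. x i j) = 1"
  using inS unfolding inS_def by (rule conjunct2)

lemma dr: "i \<le> j \<Longrightarrow> j \<le> I \<Longrightarrow> drift lam d I x i j = 0"
  using dr_all by blast

lemma ad_pos: "0 < lam * real d" using lam0 d2 by (simp add: mult_pos_pos)

lemma colsum_nonneg: assumes "j \<le> I" shows "0 \<le> colsum x j"
  unfolding colsum_def
proof (rule sum_nonneg)
  fix i assume "i \<in> {0..j}"
  then show "0 \<le> x i j" using nonneg assms by simp
qed

lemma rowsum_nonneg: assumes "i \<le> I" shows "0 \<le> rowsum I x i"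
  unfolding rowsum_def
proof (rule sum_nonneg)
  fix j assume "j \<in> {i..I}"
  then show "0 \<le> x i j" using nonneg by simp
qed

lemma colsum_zero: assumes "j \<le> I" "colsum x j = 0" "i \<le> j" shows "x i j = 0"
proof -
  have nn: "\<And>k. k \<in> {0..j} \<Longrightarrow> 0 \<le> x k j" using nonneg assms(1) by simp
  have fin: "finite {0..j}" by simp
  have "sum (\<lambda>k. x k j) {0..j} = 0" using assms(2) unfolding colsum_def .
  moreover have "(\<Sum>k\<in>{0..j}. x k j) = 0 \<longleftrightarrow> (\<forall>k\<in>{0..j}. x k j = 0)"
    by (rule sum_nonneg_eq_0_iff[OF fin]) (erule nn)
  ultimately have "\<forall>k\<in>{0..j}. x k j = 0" by simp
  then show ?thesis using assms(3) by simp
qed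

lemma ex_col: "\<exists>j\<le>I. colsum x j \<noteq> 0"
proof (rule ccontr)
  assume nc: "\<not> ?thesis"
  have z: "x i j = 0" if "i \<le> j" "j \<le> I" for i j
  proof -
    have "colsum x j = 0" using nc that(2) by blast
    then show ?thesis using colsum_zero[of j i] that by blast
  qed
  have "(\<Sum>i=0..I. \<Sum>j=i..I. x i j) = 0"
  proof (rule sum.neutral, rule ballI)
    fix i assume "i \<in> {0..I}"
    show "(\<Sum>j=i..I. x i j) = 0"
    proof (rule sum.neutral, rule ballI)
      fix j assume "j \<in> {i..I}"
      then show "x i j = 0" using z by simp
    qed
  qed
  then show False using total by simp
qed

definition m where "m = (LEAST j. j \<le> I \<and> colsum x j \<noteq> 0)"

lemma m_props: "m \<le> I" "colsum x m \<noteq> 0"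
proof -
  have "m \<le> I \<and> colsum x m \<noteq> 0" unfolding m_def by (rule LeastI_ex) (rule ex_col)
  then show "m \<le> I" "colsum x m \<noteq> 0" by simp_all
qed

lemma m_pos: "0 < colsum x m"
  using m_props colsum_nonneg[of m] by linarith

lemma below: assumes "j < m" shows "colsum x j = 0"
proof -
  have "\<not> (j \<le> I \<and> colsum x j \<noteq> 0)" using assms unfolding m_def by (rule not_less_Least)
  moreover have "j \<le> I" using assms m_props(1) by simp
  ultimately show ?thesis by simp
qed

lemma x_below: assumes "j < m" "i \<le> j" shows "x i j = 0"
proof -
  have "j \<le> I" using assms m_props(1) by simp
  then show ?thesis using colsum_zero[of j i] below[OF assms(1)] assms(2) by blast
qed

lemma scol_pos: "m \<le> k \<Longrightarrow> k \<le> I \<Longrightarrow> (\<Sum>i=0..k. colsum x i) \<noteq> 0"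
proof -
  assume a: "m \<le> k" "k \<le> I"
  have "colsum x m \<le> (\<Sum>i=0..k. colsum x i)"
    by (rule member_le_sum) (use a in \<open>auto intro: colsum_nonneg\<close>)
  with m_pos show ?thesis by linarith
qed

lemma scol_low: "k < m \<Longrightarrow> (\<Sum>i=0..k. colsum x i) = 0"
  by (rule sum.neutral) (auto intro: below)

lemma R_hi: "m \<le> k \<Longrightarrow> k \<le> I \<Longrightarrow> Rf lam d I x k = 0"
  unfolding Rf_def using scol_pos by simp

lemma G_hi: "m \<le> k \<Longrightarrow> k \<le> I \<Longrightarrow> Gf lam d I x k = 0"
  unfolding Gf_def using scol_pos by simp

lemma rho_hi: "m \<le> k \<Longrightarrow> k \<le> I \<Longrightarrow> rho lam d I x k a b = 0"
  unfolding rho_def using R_hi by simp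

lemma rho_empty: "colsum x b = 0 \<Longrightarrow> rho lam d I x k a b = 0"
  unfolding rho_def by simp

lemma rho_m: "rho lam d I x k a m = Rf lam d I x k * x a m / colsum x m"
  using m_pos unfolding rho_def by simp

lemma R_low: "k < m \<Longrightarrow> Rf lam d I x k =
   max 0 (lam * (1 - real d * (\<Sum>i=0..k. (real k + 1 - real i) * rowsum I x i)))"
  unfolding Rf_def using scol_low by simp

lemma G_low: "k < m \<Longrightarrow> Gf lam d I x k =
   (if real d * (\<Sum>i=0..k. (real k + 1 - real i) * rowsum I x i) \<le> 1
    then lam * real d * (\<Sum>i=0..k. rowsum I x i) else 0)"
  unfolding Gf_def using scol_low by simp

lemma col_hi_rec:
  assumes "m+2 \<le> j" "j \<le> I" "i < j"
  shows "x (Suc i) j = (if 0 < i then x i j else 0) + lam * real d * x i j"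
proof -
  have "drift lam d I x i j = 0" using dr assms by simp
  moreover have "rho lam d I x (j-1) i j = 0" by (rule rho_hi) (use assms in auto)
  moreover have "rho lam d I x (j-2) (i-1) (j-1) = 0" by (rule rho_hi) (use assms in auto)
  moreover have "rho lam d I x (I-1) (i-1) I = 0" by (rule rho_hi) (use assms in auto)
  moreover have "drift lam d I x i j = x (i+1) j - (if i > 0 then x i j else 0) - lam * real d * x i j
       - rho lam d I x (j-1) i j
       + (if i > 0 then rho lam d I x (j-2) (i-1) (j-1) else 0)
       + (if j = I \<and> i > 0 then rho lam d I x (I-1) (i-1) I else 0)"
    by (rule drift_off) (use assms in simp)
  moreover have "(if j = I \<and> i > 0 then rho lam d I x (I-1) (i-1) I else 0) = 0"
    using \<open>rho lam d I x (I-1) (i-1) I = 0\<close> by simp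
  moreover have "(if i > 0 then rho lam d I x (j-2) (i-1) (j-1) else 0) = 0"
    using \<open>rho lam d I x (j-2) (i-1) (j-1) = 0\<close> by simp
  ultimately show ?thesis by (cases "i = 0") simp_all
qed

lemma col_zero_from_diag:
  assumes "m+2 \<le> j" "j \<le> I" "x j j = 0"
  shows "\<forall>i\<le>j. x i j = 0"
proof (rule down_zero[where c="lam * real d"])
  show "\<forall>i<j. lam * real d * x i j \<le> x (Suc i) j"
  proof (intro allI impI)
    fix i assume "i < j"
    then have "x (Suc i) j = (if 0 < i then x i j else 0) + lam * real d * x i j"
      using col_hi_rec assms by auto
    moreover have "0 \<le> x i j" using nonneg \<open>i < j\<close> assms by auto
    ultimately show "lam * real d * x i j \<le> x (Suc i) j" by auto
  qed
qed (use ad_pos nonneg assms in auto)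

lemma rowsum_split: "i \<le> I \<Longrightarrow> rowsum I x i = x i i + (\<Sum>k=Suc i..I. x i k)"
  unfolding rowsum_def by (simp add: sum.atLeast_Suc_atMost)

lemma diag_hi:
  assumes "m+2 \<le> j" "j \<le> I" "\<forall>k. j < k \<and> k \<le> I \<longrightarrow> x j k = 0"
  shows "x j j = 0"
proof (cases "j = I")
  case True
  have "drift lam d I x I I = 0" using dr by simp
  moreover have "rho lam d I x (I-2) (I-1) (I-1) = 0" by (rule rho_hi) (use assms True in auto)
  moreover have "rho lam d I x (I-1) (I-1) I = 0" by (rule rho_hi) (use assms True in auto)
  moreover have "Gf lam d I x (I-1) = 0" by (rule G_hi) (use assms True in auto)
  moreover have "drift lam d I x I I = - x I I + rho lam d I x (I-2) (I-1) (I-1) + Gf lam d I x (I-1)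
       + rho lam d I x (I-1) (I-1) I" by (rule drift_II) (use I1 in simp)
  ultimately show ?thesis using True by simp
next
  case False
  have "drift lam d I x j j = 0" using dr assms by simp
  moreover have "rho lam d I x (j-2) (j-1) (j-1) = 0" by (rule rho_hi) (use assms in auto)
  moreover have "rho lam d I x (j-1) j j = 0" by (rule rho_hi) (use assms in auto)
  moreover have "Gf lam d I x (j-1) = 0" by (rule G_hi) (use assms in auto)
  moreover have "Gf lam d I x j = 0" by (rule G_hi) (use assms in auto)
  moreover have "rowsum I x j = x j j"
    using rowsum_split[of j] assms by (auto intro!: sum.neutral)
  moreover have "drift lam d I x j j =
       - x j j + lam * real d * (rowsum I x j - x j j)
       - rho lam d I x (j-1) j j + rho lam d I x (j-2) (j-1) (j-1)
       + Gf lam d I x (j-1) - Gf lam d I x j" by (rule drift_mid) (use assms False in auto)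
  ultimately show ?thesis by simp
qed

lemma high_zero: assumes "m+2 \<le> j" "j \<le> I" "i \<le> j" shows "x i j = 0"
proof -
  have main: "\<forall>k. n \<le> k \<and> k \<le> I \<longrightarrow> (\<forall>i\<le>k. x i k = 0)" if "m+2 \<le> n" "n \<le> I" for n
    using that(2)
  proof (induction n rule: inc_induct)
    case base
    have "\<forall>k. I < k \<and> k \<le> I \<longrightarrow> x I k = 0" by simp
    then have "x I I = 0" using diag_hi[of I] that by simp
    then have cI: "\<forall>i\<le>I. x i I = 0" using col_zero_from_diag[of I] that by simp
    show ?case
    proof (rule allI, rule impI)
      fix k assume "I \<le> k \<and> k \<le> I"
      then have "k = I" by simp
      then show "\<forall>i\<le>k. x i k = 0" using cI by simp
    qed
  next
    case (step n)
    have mn: "m + 2 \<le> n" using that(1) step.hyps(1) by simp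
    have nI: "n \<le> I" using step.hyps(2) by simp
    have "\<forall>k. n < k \<and> k \<le> I \<longrightarrow> x n k = 0"
    proof (rule allI, rule impI)
      fix k assume "n < k \<and> k \<le> I"
      then have "Suc n \<le> k \<and> k \<le> I" by simp
      then have "\<forall>i\<le>k. x i k = 0" using step.IH by blast
      then show "x n k = 0" using \<open>n < k \<and> k \<le> I\<close> by simp
    qed
    then have "x n n = 0" using diag_hi[of n] mn nI by simp
    then have cn: "\<forall>i\<le>n. x i n = 0" using col_zero_from_diag[of n] mn nI by simp
    show ?case
    proof (rule allI, rule impI)
      fix k assume k: "n \<le> k \<and> k \<le> I"
      show "\<forall>i\<le>k. x i k = 0"
      proof (cases "k = n")
        case True then show ?thesis using cn by simp
      next
        case False then have "Suc n \<le> k \<and> k \<le> I" using k by simp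
        then show ?thesis using step.IH by blast
      qed
    qed
  qed
  have "\<forall>i\<le>j. x i j = 0" using main[of j] assms by simp
  then show ?thesis using assms by simp
qed

end




lemma sum_two:
  fixes f :: "nat \<Rightarrow> real"
  assumes "finite A" "p \<noteq> q" "\<forall>j\<in>A. j \<noteq> p \<longrightarrow> j \<noteq> q \<longrightarrow> f j = 0"
  shows "sum f A = (if p \<in> A then f p else 0) + (if q \<in> A then f q else 0)"
proof -
  have "sum f A = (\<Sum>j\<in>A. (if j = p then f p else 0) + (if j = q then f q else 0))"
    by (rule sum.cong) (use assms in auto)
  also have "\<dots> = (if p \<in> A then f p else 0) + (if q \<in> A then f q else 0)"
    using assms(1) by (simp add: sum.distrib)
  finally show ?thesis .
qed

context fp begin

lemma case0:
  assumes "m = 0"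
  shows "LM I x = LS I x + 1 / real d \<and> LS I x = lam \<and> 1 < (lam * real d + 1) * (1 - lam)
    \<and> 1 / real d < 1 - lam"
proof -
  have hz: "\<And>i j. 2 \<le> j \<Longrightarrow> j \<le> I \<Longrightarrow> i \<le> j \<Longrightarrow> x i j = 0" using high_zero assms by auto
  have x00: "0 < x 0 0" using m_pos assms by (simp add: colsum_def)
  have r0: "rowsum I x 0 = x 0 0 + x 0 1"
    unfolding rowsum_def by (subst sum_two[where p=0 and q=1]) (use hz I1 in auto)
  have r1: "rowsum I x 1 = x 1 1"
    unfolding rowsum_def by (subst sum_two[where p=1 and q=0]) (use hz I1 in auto)
  have rhi: "rowsum I x i = 0" if "2 \<le> i" "i \<le> I" for i
    unfolding rowsum_def by (rule sum.neutral) (use hz that in auto)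
  have c1: "colsum x 1 = x 0 1 + x 1 1" by (simp add: colsum_def)
  have chi: "colsum x j = 0" if "2 \<le> j" "j \<le> I" for j
    unfolding colsum_def by (rule sum.neutral) (use hz that in auto)
  have tot: "(\<Sum>i=0..I. rowsum I x i) = 1" using total by (simp add: rowsum_def)
  have "(\<Sum>i=0..I. rowsum I x i) = rowsum I x 0 + rowsum I x 1"
    by (subst sum_two[where p=0 and q=1]) (use rhi I1 in auto)
  then have t1: "x 0 0 + x 0 1 + x 1 1 = 1" using tot r0 r1 by simp
  have LMv: "LM I x = x 0 1 + x 1 1"
    unfolding LM_def by (subst sum_two[where p=1 and q=0]) (use chi c1 I1 in auto)
  have LSv: "LS I x = x 1 1"
    unfolding LS_def by (subst sum_two[where p=1 and q=0]) (use rhi r1 I1 in auto)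
  have R0: "Rf lam d I x 0 = 0" by (rule R_hi) (use assms in auto)
  have "drift lam d I x 0 0 = 0" using dr by simp
  then have e00: "lam * real d * x 0 1 = lam" using R0 r0 drift_00[of lam d I x] by simp
  have "drift lam d I x 1 1 = 0" using dr I1 by simp
  moreover have "rho lam d I x 0 1 1 = 0" by (rule rho_hi) (use assms in auto)
  moreover have "Gf lam d I x 1 = 0" by (rule G_hi) (use assms I1 in auto)
  ultimately have e11: "x 1 1 = lam" using R0 r1 drift_11[of lam d I x] by simp
  have x01: "x 0 1 = 1 / real d" using e00 lam0 d2 by (simp add: field_simps)
  have dl: "1 / real d < 1 - lam" using t1 x00 x01 e11 by linarith
  then have "1 < real d * (1 - lam)" using d2 by (simp add: field_simps)
  then have "0 < lam * (real d * (1 - lam) - 1)" using lam0 by simp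
  then have "1 < (lam * real d + 1) * (1 - lam)" by (simp add: algebra_simps)
  then show ?thesis using LMv LSv x01 e11 dl by simp
qed

end



lemma js_le_iff:
  assumes "0 < lam" "lam < 1" "0 < d"
  shows "real n \<le> - ln (1 - lam) / ln (lam * real d + 1) \<longleftrightarrow> (lam * real d + 1) ^ n * (1 - lam) \<le> 1"
proof -
  let ?q = "lam * real d + 1"
  have q1: "1 < ?q" using assms by simp
  have lq: "0 < ln ?q" using q1 by simp
  have "real n \<le> - ln (1 - lam) / ln ?q \<longleftrightarrow> real n * ln ?q \<le> - ln (1 - lam)"
    by (rule pos_le_divide_eq[OF lq])
  also have "\<dots> \<longleftrightarrow> ln (?q ^ n * (1 - lam)) \<le> 0"
    using q1 assms by (simp add: ln_mult ln_realpow, linarith)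
  also have "\<dots> \<longleftrightarrow> ?q ^ n * (1 - lam) \<le> 1"
  proof -
    have "0 < ?q" using q1 by linarith
    then have "0 < ?q ^ n * (1 - lam)" using assms by simp
    then show ?thesis by (rule ln_le_zero_iff)
  qed
  finally show ?thesis .
qed

lemma jstar_eq:
  assumes "0 < lam" "lam < 1" "0 < d"
    and "(lam * real d + 1) ^ n * (1 - lam) \<le> 1" "1 < (lam * real d + 1) ^ Suc n * (1 - lam)"
  shows "jstar lam d = int n"
proof -
  have a: "real n \<le> - ln (1 - lam) / ln (lam * real d + 1)"
    using js_le_iff[OF assms(1-3)] assms(4) by simp
  have b: "\<not> real (Suc n) \<le> - ln (1 - lam) / ln (lam * real d + 1)"
    using js_le_iff[OF assms(1-3), of "Suc n"] assms(5) by simp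
  show ?thesis unfolding jstar_def using a b by (simp add: floor_eq_iff)
qed

lemma jstar_ge:
  assumes "0 < lam" "lam < 1" "0 < d"
    and "(lam * real d + 1) ^ n * (1 - lam) \<le> 1"
  shows "int n \<le> jstar lam d"
proof -
  have a: "real n \<le> - ln (1 - lam) / ln (lam * real d + 1)"
    using js_le_iff[OF assms(1-3)] assms(4) by simp
  show ?thesis unfolding jstar_def using a by (simp add: le_floor_iff)
qed




context fp begin

lemma caseI:
  assumes mI: "m = I"
  shows "(lam * real d + 1) ^ I * (1 - lam) \<le> 1"
proof -
  define z where "z i = x i I" for i
  define a where "a = lam * real d"
  define C where "C = colsum x I"
  define R where "R = Rf lam d I x (I-1)"
  define s where "s = R / C"
  have a0: "0 < a" using ad_pos a_def by simp
  have lowz: "\<And>i j. j < I \<Longrightarrow> i \<le> j \<Longrightarrow> x i j = 0" using x_below mI by auto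
  have row: "rowsum I x i = z i" if "i \<le> I" for i
    unfolding rowsum_def z_def by (subst sum_two[where p=I and q="Suc I"]) (use that lowz in auto)
  have zn: "0 \<le> z i" if "i \<le> I" for i using nonneg that z_def by auto
  have Cz: "C = (\<Sum>k\<le>I. z k)" unfolding C_def colsum_def z_def by (simp add: atLeast0AtMost)
  have "(\<Sum>i=0..I. rowsum I x i) = 1" using total by (simp add: rowsum_def)
  then have C1: "C = 1" using Cz row by (simp add: atLeast0AtMost)
  have rhoI: "rho lam d I x (I-1) i I = s * z i" for i
    using rho_m[of "I-1" i] mI unfolding s_def R_def C_def z_def by simp
  have rho0: "rho lam d I x k b (I-1) = 0" for k b by (rule rho_empty) (use below mI I1 in auto)
  have Ez: "z (Suc i) = (if 0<i then z i else 0) + (a+s)*z i - (if 0<i then s*z(i-1) else 0)"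
    if "i < I" for i
  proof -
    have d0: "drift lam d I x i I = 0" using dr that by simp
    have e: "drift lam d I x i I = x (i+1) I - (if i > 0 then x i I else 0) - lam * real d * x i I
       - rho lam d I x (I-1) i I
       + (if i > 0 then rho lam d I x (I-2) (i-1) (I-1) else 0)
       + (if I = I \<and> i > 0 then rho lam d I x (I-1) (i-1) I else 0)"
      by (rule drift_off) (rule that)
    show ?thesis using d0 e rhoI[of i] rhoI[of "i-1"] rho0[of "I-2" "i-1"] unfolding z_def a_def
      by (cases "i = 0") (simp_all add: algebra_simps)
  qed
  have cut: "z (Suc i) = a * (\<Sum>k\<le>i. z k) + s * z i" if "i < I" for i
    using that
  proof (induction i)
    case 0 then show ?case using Ez[of 0] by (simp add: algebra_simps)
  next
    case (Suc i)
    then show ?case using Ez[of "Suc i"] by (simp add: algebra_simps)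
  qed
  define Q where "Q = (\<Sum>i<I. \<Sum>k\<le>i. z k)"
  have I0: "{0..I-1} = {..<I}" using I1 by auto
  have Qeq: "(\<Sum>i=0..I-1. (real (I-1) + 1 - real i) * rowsum I x i) = Q"
  proof -
    have "(\<Sum>i=0..I-1. (real (I-1) + 1 - real i) * rowsum I x i) = (\<Sum>i<I. (real I - real i) * z i)"
      unfolding I0 by (rule sum.cong) (use row I1 in \<open>auto simp: of_nat_diff\<close>)
    then show ?thesis unfolding Q_def using sum_prefix by simp
  qed
  have Gv: "Gf lam d I x (I-1) = (if real d * Q \<le> 1 then lam * real d * (\<Sum>i=0..I-1. rowsum I x i) else 0)"
    using G_low[of "I-1"] mI I1 Qeq by simp
  have Rv: "R = max 0 (lam * (1 - real d * Q))"
    using R_low[of "I-1"] mI I1 Qeq unfolding R_def by simp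
  have "drift lam d I x I I = 0" using dr by simp
  then have diag: "z I = Gf lam d I x (I-1) + s * z (I-1)"
    using rhoI[of "I-1"] rho0[of "I-2" "I-1"] drift_II[OF I1, of lam d x] unfolding z_def by simp
  have cond: "real d * Q \<le> 1"
  proof (rule ccontr)
    assume nc: "\<not> real d * Q \<le> 1"
    then have "R = 0" using Rv lam0 by (simp add: mult_le_0_iff)
    then have "s = 0" unfolding s_def by simp
    with diag Gv nc have "z I = 0" by simp
    moreover have "z I = a * (\<Sum>k\<le>I-1. z k)" using cut[of "I-1"] I1 \<open>s = 0\<close> by simp
    ultimately have "(\<Sum>k\<le>I-1. z k) = 0" using a0 by simp
    moreover have "(\<Sum>k\<le>I. z k) = (\<Sum>k\<le>I-1. z k) + z I"
      using I1 by (metis Suc_diff_1 less_trans zero_less_one sum.atMost_Suc)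
    ultimately show False using \<open>z I = 0\<close> Cz C1 by simp
  qed
  have Rs: "s = lam * (1 - real d * Q)" using Rv cond C1 lam0 unfolding s_def by simp
  have s0: "0 \<le> s" using Rs cond lam0 by simp
  have tele: "(\<Sum>k\<le>n. z k) = z 0 + a * (\<Sum>i<n. \<Sum>k\<le>i. z k) + s * (\<Sum>k<n. z k)" if "n \<le> I" for n
    using that
  proof (induction n)
    case 0 then show ?case by simp
  next
    case (Suc n)
    then show ?case using cut[of n] by (simp add: algebra_simps)
  qed
  have zsum: "(\<Sum>k<I. z k) \<le> 1"
  proof -
    have "(\<Sum>k\<le>I. z k) = (\<Sum>k<I. z k) + z I" by (simp add: lessThan_Suc_atMost[symmetric])
    then show ?thesis using Cz C1 zn[of I] by simp
  qed
  have "1 = z 0 + a * Q + s * (\<Sum>k<I. z k)" using tele[of I] Cz C1 unfolding Q_def by simp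
  moreover have "a * Q = lam - s" using Rs unfolding a_def by (simp add: algebra_simps)
  moreover have "s * (\<Sum>k<I. z k) \<le> s" using zsum s0 by (simp add: mult_left_le)
  ultimately have z0: "1 - lam \<le> z 0" by linarith
  have grow: "(a+1)^n * z 0 \<le> (\<Sum>k\<le>n. z k)" if "n \<le> I" for n
    using that
  proof (induction n)
    case 0 then show ?case by simp
  next
    case (Suc n)
    have "(\<Sum>k\<le>Suc n. z k) = (a+1) * (\<Sum>k\<le>n. z k) + s * z n"
      using cut[of n] Suc.prems by (simp add: algebra_simps)
    moreover have "0 \<le> s * z n" using s0 zn Suc.prems by simp
    moreover have "(a+1) * ((a+1)^n * z 0) \<le> (a+1) * (\<Sum>k\<le>n. z k)"
      using Suc a0 by (intro mult_left_mono) auto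
    ultimately show ?case by simp
  qed
  have "(a+1)^I * (1 - lam) \<le> (a+1)^I * z 0" using z0 a0 by (intro mult_left_mono) auto
  also have "\<dots> \<le> 1" using grow[of I] Cz C1 by simp
  finally show ?thesis unfolding a_def .
qed

end



lemma sum_if_le:
  fixes f :: "nat \<Rightarrow> real"
  assumes "m \<le> n"
  shows "(\<Sum>i\<le>n. if i \<le> m then f i else 0) = (\<Sum>i\<le>m. f i)"
proof -
  have "(\<Sum>i\<le>n. if i \<le> m then f i else 0) = (\<Sum>i\<le>n. if i \<in> {..m} then f i else 0)" by simp
  also have "\<dots> = sum f ({..n} \<inter> {..m})" by (rule sum.inter_restrict[symmetric]) simp
  also have "{..n} \<inter> {..m} = {..m}" using assms by auto
  finally show ?thesis .
qed

lemma atMost_lessThan_split: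
  fixes f :: "nat \<Rightarrow> real"
  shows "(\<Sum>k\<le>n. f k) = (\<Sum>k<n. f k) + f n"
  by (simp add: lessThan_Suc_atMost[symmetric])

context fp begin

lemma caseG:
  assumes m1: "1 \<le> m" and mI: "m < I"
  shows "(lam * real d + 1) ^ m * (1 - lam) \<le> 1 \<and> 1 < (lam * real d + 1) ^ Suc m * (1 - lam)
     \<and> LM I x = LS I x + 1 / real d \<and> real m - 1 / real d \<le> LS I x \<and> LS I x \<le> real m - 1 / real d + 1"
proof -
  define z where "z i = x i m" for i
  define y where "y i = x i (Suc m)" for i
  define a where "a = lam * real d"
  define C where "C = colsum x m"
  define R where "R = Rf lam d I x (m-1)"
  define s where "s = R / C"
  have a0: "0 < a" using ad_pos a_def by simp
  have Cpos: "0 < C" using m_pos C_def by simp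
  have zn: "0 \<le> z i" if "i \<le> m" for i using nonneg that z_def mI by auto
  have yn: "0 \<le> y i" if "i \<le> Suc m" for i using nonneg that y_def mI by auto
  have zer: "x i j = 0" if "i \<le> j" "j \<le> I" "j \<noteq> m" "j \<noteq> Suc m" for i j
  proof (cases "j < m")
    case True then show ?thesis using x_below that by auto
  next
    case False then show ?thesis using high_zero that by auto
  qed
  have row: "rowsum I x i = (if i \<le> m then z i else 0) + (if i \<le> Suc m then y i else 0)"
    if "i \<le> I" for i
    unfolding rowsum_def z_def y_def
    by (subst sum_two[where p=m and q="Suc m"]) (use that zer mI in auto)
  have Cz: "C = (\<Sum>k\<le>m. z k)" unfolding C_def colsum_def z_def by (simp add: atLeast0AtMost)
  define Y where "Y = (\<Sum>k\<le>Suc m. y k)"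
  have colo: "colsum x j = 0" if "j \<le> I" "j \<noteq> m" "j \<noteq> Suc m" for j
    unfolding colsum_def by (rule sum.neutral) (use zer that in auto)
  have c1: "colsum x (Suc m) = Y" unfolding Y_def colsum_def y_def by (simp add: atLeast0AtMost)
  have "(\<Sum>i=0..I. rowsum I x i) = 1" using total by (simp add: rowsum_def)
  then have "(\<Sum>i\<le>I. (if i \<le> m then z i else 0) + (if i \<le> Suc m then y i else 0)) = 1"
    using row by (simp add: atLeast0AtMost)
  then have tot: "C + Y = 1"
    using mI by (simp add: sum.distrib sum_if_le Cz Y_def)
  have "LS I x = (\<Sum>i\<le>I. real i * rowsum I x i)"
    unfolding LS_def by (simp add: atLeast0AtMost[symmetric] sum.atLeast_Suc_atMost[of 0])
  also have "\<dots> = (\<Sum>i\<le>I. (if i \<le> m then real i * z i else 0) + (if i \<le> Suc m then real i * y i else 0))"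
    by (rule sum.cong) (auto simp: row algebra_simps)
  finally have LSv: "LS I x = (\<Sum>i\<le>m. real i * z i) + (\<Sum>i\<le>Suc m. real i * y i)"
    using mI by (simp add: sum.distrib sum_if_le)
  have LMv: "LM I x = real m * C + real (Suc m) * Y"
    unfolding LM_def
    by (subst sum_two[where p=m and q="Suc m"]) (use colo m1 mI c1 C_def in auto)
  have rhoz: "rho lam d I x (m-1) i m = s * z i" for i
    using rho_m[of "m-1" i] unfolding s_def R_def C_def z_def by simp
  have rhol: "rho lam d I x k b (m-1) = 0" for k b by (rule rho_empty) (use below m1 in auto)
  have rhoh: "rho lam d I x k b c = 0" if "m \<le> k" "k \<le> I" for k b c using rho_hi that by simp
  have Ez: "z (Suc i) = (if 0<i then z i else 0) + (a+s)*z i" if "i < m" for i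
  proof -
    have d0: "drift lam d I x i m = 0" using dr that mI by simp
    have e: "drift lam d I x i m = x (i+1) m - (if i > 0 then x i m else 0) - lam * real d * x i m
       - rho lam d I x (m-1) i m
       + (if i > 0 then rho lam d I x (m-2) (i-1) (m-1) else 0)
       + (if m = I \<and> i > 0 then rho lam d I x (I-1) (i-1) I else 0)"
      by (rule drift_off) (rule that)
    show ?thesis using d0 e rhoz[of i] rhol[of "m-2" "i-1"] mI unfolding z_def a_def
      by (cases "i = 0") (simp_all add: algebra_simps)
  qed
  have Ey: "y (Suc i) = (if 0<i then y i else 0) + a*y i - (if 0<i then s*z(i-1) else 0)"
    if "i \<le> m" for i
  proof -
    have d0: "drift lam d I x i (Suc m) = 0" using dr that mI by simp
    have e: "drift lam d I x i (Suc m) = x (i+1) (Suc m) - (if i > 0 then x i (Suc m) else 0)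
       - lam * real d * x i (Suc m)
       - rho lam d I x (Suc m-1) i (Suc m)
       + (if i > 0 then rho lam d I x (Suc m-2) (i-1) (Suc m-1) else 0)
       + (if Suc m = I \<and> i > 0 then rho lam d I x (I-1) (i-1) I else 0)"
      by (rule drift_off) (use that in simp)
    have r1: "rho lam d I x (Suc m - 1) i (Suc m) = 0" using rhoh mI by simp
    have r2: "rho lam d I x (I-1) (i-1) I = 0" using rhoh mI by simp
    have r3: "rho lam d I x (Suc m-2) (i-1) (Suc m-1) = s * z (i-1)"
    proof -
      have "Suc m - 2 = m - 1" "Suc m - 1 = m" using m1 by simp_all
      then show ?thesis using rhoz[of "i-1"] by simp
    qed
    have r4: "(if Suc m = I \<and> i > 0 then rho lam d I x (I-1) (i-1) I else 0) = 0" using r2 by simp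
    show ?thesis using d0 e r1 r4 r3 unfolding y_def a_def
      by (cases "i = 0") (simp_all add: algebra_simps)
  qed
  have Gm: "Gf lam d I x m = 0" using G_hi mI by simp
  have GSm: "Gf lam d I x (Suc m) = 0" using G_hi mI by simp
  have Dm1: "y (Suc m) = s * z m"
  proof (cases "Suc m = I")
    case True
    have "drift lam d I x I I = - x I I + rho lam d I x (I-2) (I-1) (I-1) + Gf lam d I x (I-1)
        + rho lam d I x (I-1) (I-1) I"
      by (rule drift_II) (rule I1)
    moreover have "drift lam d I x I I = 0" using dr by simp
    moreover have "rho lam d I x m m I = 0" using rhoh mI by simp
    moreover have "I - 2 = m - 1" "I - 1 = m" using True by linarith+
    ultimately have "x I I = rho lam d I x (m-1) m m" using Gm by simp
    then show ?thesis using rhoz[of m] True unfolding y_def by simp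
  next
    case False
    have "drift lam d I x (Suc m) (Suc m) = - x (Suc m) (Suc m)
        + lam * real d * (rowsum I x (Suc m) - x (Suc m) (Suc m))
        - rho lam d I x m (Suc m) (Suc m) + rho lam d I x (m-1) m m
        + Gf lam d I x m - Gf lam d I x (Suc m)"
      using drift_mid[of "Suc m" I lam d x] False mI m1 by simp
    moreover have "drift lam d I x (Suc m) (Suc m) = 0" using dr mI by simp
    moreover have "rho lam d I x m (Suc m) (Suc m) = 0" using rhoh mI by simp
    moreover have "rowsum I x (Suc m) = y (Suc m)" using row mI by simp
    ultimately show ?thesis using rhoz[of m] Gm GSm unfolding y_def by simp
  qed
  define Q where "Q = (\<Sum>i<m. (\<Sum>k\<le>i. z k) + (\<Sum>k\<le>i. y k))"
  have m0: "{0..m-1} = {..<m}" using m1 by auto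
  have Qeq: "(\<Sum>i=0..m-1. (real (m-1) + 1 - real i) * rowsum I x i) = Q"
  proof -
    have "(\<Sum>i=0..m-1. (real (m-1) + 1 - real i) * rowsum I x i) = (\<Sum>i<m. (real m - real i) * (z i + y i))"
      unfolding m0 by (rule sum.cong) (use row m1 mI in \<open>auto simp: of_nat_diff\<close>)
    also have "\<dots> = (\<Sum>i<m. \<Sum>k\<le>i. z k + y k)" using sum_prefix by simp
    finally show ?thesis unfolding Q_def by (simp add: sum.distrib)
  qed
  have Gv: "Gf lam d I x (m-1) = (if real d * Q \<le> 1 then lam * real d * (\<Sum>i=0..m-1. rowsum I x i) else 0)"
    using G_low[of "m-1"] m1 Qeq by simp
  have Rv: "R = max 0 (lam * (1 - real d * Q))"
    using R_low[of "m-1"] m1 Qeq unfolding R_def by simp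
  have cz: "z (Suc i) = (a+s) * (\<Sum>k\<le>i. z k)" if "i < m" for i
    using that
  proof (induction i)
    case 0 then show ?case using Ez[of 0] by simp
  next
    case (Suc i)
    then show ?case using Ez[of "Suc i"] by (simp add: algebra_simps)
  qed
  have cy: "y (Suc i) = a * (\<Sum>k\<le>i. y k) - s * (\<Sum>k<i. z k)" if "i \<le> m" for i
    using that
  proof (induction i)
    case 0 then show ?case using Ey[of 0] by simp
  next
    case (Suc i)
    then show ?case using Ey[of "Suc i"] by (simp add: algebra_simps)
  qed
  have cond: "real d * Q \<le> 1"
  proof (cases "m = 1")
    case True
    have "drift lam d I x 0 0 = 0" using dr by simp
    moreover have "x 0 0 = 0" using x_below m1 by simp
    moreover have "rowsum I x 0 = z 0 + y 0" using row by simp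
    moreover have "Q = z 0 + y 0" unfolding Q_def using True by simp
    ultimately have "lam * real d * Q - lam + R = 0"
      using drift_00[of lam d I x] True unfolding R_def by simp
    then show ?thesis using Rv lam0
      by (cases "real d * Q \<le> 1") (auto simp: algebra_simps max_def split: if_splits)
  next
    case False
    show ?thesis
    proof (rule ccontr)
      assume nc: "\<not> real d * Q \<le> 1"
      then have "R = 0" using Rv lam0 by (simp add: mult_le_0_iff)
      then have s0: "s = 0" unfolding s_def by simp
      have "drift lam d I x m m = 0" using dr mI by simp
      moreover have "drift lam d I x m m = - x m m + lam * real d * (rowsum I x m - x m m)
          - rho lam d I x (m-1) m m + rho lam d I x (m-2) (m-1) (m-1)
          + Gf lam d I x (m-1) - Gf lam d I x m"
        using drift_mid[of m I lam d x] False mI m1 by simp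
      moreover have "rowsum I x m = z m + y m" using row mI by simp
      ultimately have "- z m + a * y m - s * z m = 0"
        using rhoz[of m] rhol Gm Gv nc unfolding z_def a_def by simp
      then have zm: "z m = a * y m" using s0 by simp
      have "a * (\<Sum>k\<le>m. y k) = 0" using cy[of m] Dm1 s0 by simp
      then have ys: "(\<Sum>k\<le>m. y k) = 0" using a0 by simp
      have "y m \<le> (\<Sum>k\<le>m. y k)" by (rule member_le_sum) (use yn in auto)
      then have "y m = 0" using ys yn[of m] by simp
      then have "z m = 0" using zm by simp
      moreover have "z m = a * (\<Sum>k\<le>m-1. z k)" using cz[of "m-1"] s0 m1 by simp
      ultimately have "(\<Sum>k\<le>m-1. z k) = 0" using a0 by simp
      moreover have "(\<Sum>k\<le>m. z k) = (\<Sum>k\<le>m-1. z k) + z m"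
        using m1 by (metis Suc_diff_1 less_le_trans zero_less_one sum.atMost_Suc)
      ultimately show False using \<open>z m = 0\<close> Cz Cpos by simp
    qed
  qed
  have Rl: "R = lam * (1 - real d * Q)" using Rv cond lam0 by simp
  have RC: "R = s * C" using Cpos unfolding s_def by simp
  have zc: "(\<Sum>k\<le>n. z k) = (1+a+s)^n * z 0" if "n \<le> m" for n
    using that
  proof (induction n)
    case 0 then show ?case by simp
  next
    case (Suc n)
    then show ?case using cz[of n] by (simp add: algebra_simps)
  qed
  have X: "(\<Sum>k\<le>Suc n. y k) + (\<Sum>k\<le>n. z k) = (1+a)^n * ((1+a) * y 0 + z 0)" if "n \<le> m" for n
    using that
  proof (induction n)
    case 0 then show ?case using cy[of 0] by (simp add: algebra_simps)
  next
    case (Suc n)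
    have e1: "y (Suc (Suc n)) = a * (\<Sum>k\<le>Suc n. y k) - s * (\<Sum>k\<le>n. z k)"
      using cy[of "Suc n"] Suc.prems by (simp add: lessThan_Suc_atMost)
    have e2: "z (Suc n) = (a+s) * (\<Sum>k\<le>n. z k)" using cz[of n] Suc.prems by simp
    have "(\<Sum>k\<le>Suc (Suc n). y k) + (\<Sum>k\<le>Suc n. z k)
        = (1+a) * ((\<Sum>k\<le>Suc n. y k) + (\<Sum>k\<le>n. z k))"
      using e1 e2 by (simp add: algebra_simps)
    then show ?case using Suc by simp
  qed
  have tele: "(\<Sum>k\<le>n. z k) + (\<Sum>k\<le>n. y k) = z 0 + y 0 + a * (\<Sum>i<n. (\<Sum>k\<le>i. z k) + (\<Sum>k\<le>i. y k))
      + s * (\<Sum>k<n. z k)" if "n \<le> m" for n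
    using that
  proof (induction n)
    case 0 then show ?case by simp
  next
    case (Suc n)
    have e1: "y (Suc n) = a * (\<Sum>k\<le>n. y k) - s * (\<Sum>k<n. z k)" using cy[of n] Suc.prems by simp
    have e2: "z (Suc n) = (a+s) * (\<Sum>k\<le>n. z k)" using cz[of n] Suc.prems by simp
    have e3: "s * (\<Sum>k\<le>n. z k) = s * (\<Sum>k<n. z k) + s * z n"
      using atMost_lessThan_split[of z n] by (simp add: distrib_left)
    have IH: "(\<Sum>k\<le>n. z k) + (\<Sum>k\<le>n. y k) = z 0 + y 0 + a * (\<Sum>i<n. (\<Sum>k\<le>i. z k) + (\<Sum>k\<le>i. y k))
      + s * (\<Sum>k<n. z k)" using Suc by simp
    have s1: "(\<Sum>k\<le>Suc n. z k) = (\<Sum>k\<le>n. z k) + z (Suc n)" by simp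
    have s2: "(\<Sum>k\<le>Suc n. y k) = (\<Sum>k\<le>n. y k) + y (Suc n)" by simp
    have s3: "(\<Sum>i<Suc n. (\<Sum>k\<le>i. z k) + (\<Sum>k\<le>i. y k)) =
       (\<Sum>i<n. (\<Sum>k\<le>i. z k) + (\<Sum>k\<le>i. y k)) + ((\<Sum>k\<le>n. z k) + (\<Sum>k\<le>n. y k))" by simp
    have s4: "(\<Sum>k<Suc n. z k) = (\<Sum>k<n. z k) + z n" by simp
    show ?case unfolding s1 s2 s3 s4 using IH e1 e2 e3 unfolding ring_distribs by linarith
  qed
  have Zm: "(\<Sum>k\<le>m. z k) = (\<Sum>k<m. z k) + z m" by (rule atMost_lessThan_split)
  have Ysplit: "Y = (\<Sum>k\<le>m. y k) + y (Suc m)" unfolding Y_def by simp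
  have aQ: "a * Q + R = lam" using Rl unfolding a_def by (simp add: algebra_simps)
  have "1 = z 0 + y 0 + a * Q + s * C"
    using tele[of m] tot Ysplit Dm1 Zm Cz unfolding Q_def by (simp add: algebra_simps)
  then have S0: "z 0 + y 0 = 1 - lam" using aQ RC by simp
  have aYm: "a * (\<Sum>k\<le>m. y k) = R" using cy[of m] Dm1 Zm Cz RC by (simp add: algebra_simps)
  have Dz: "real m * C - (\<Sum>i\<le>m. real i * z i) = (\<Sum>i<m. \<Sum>k\<le>i. z k)"
  proof -
    have "real m * C - (\<Sum>i\<le>m. real i * z i) = (\<Sum>i\<le>m. (real m - real i) * z i)"
      unfolding Cz by (simp add: sum_distrib_left sum_subtractf algebra_simps)
    also have "\<dots> = (\<Sum>i<m. (real m - real i) * z i)" by (simp add: atMost_lessThan_split)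
    finally show ?thesis using sum_prefix by simp
  qed
  have Dy: "real (Suc m) * Y - (\<Sum>i\<le>Suc m. real i * y i) = (\<Sum>i<Suc m. \<Sum>k\<le>i. y k)"
  proof -
    have "real (Suc m) * Y - (\<Sum>i\<le>Suc m. real i * y i) = (\<Sum>i\<le>Suc m. (real (Suc m) - real i) * y i)"
      unfolding Y_def by (simp only: sum_distrib_left sum_subtractf[symmetric] left_diff_distrib)
    also have "\<dots> = (\<Sum>i<Suc m. (real (Suc m) - real i) * y i)"
      by (subst atMost_lessThan_split) simp
    finally show ?thesis using sum_prefix[of y "Suc m"] by simp
  qed
  have "LM I x - LS I x = Q + (\<Sum>k\<le>m. y k)"
    using LMv LSv Dz Dy unfolding Q_def by (simp add: sum.distrib algebra_simps)
  moreover have "a * (Q + (\<Sum>k\<le>m. y k)) = lam" using aQ aYm by (simp add: algebra_simps)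
  ultimately have "a * (LM I x - LS I x) = lam" by simp
  then have "lam * (real d * (LM I x - LS I x)) = lam * 1" unfolding a_def by (simp add: mult.assoc)
  then have "real d * (LM I x - LS I x) = 1" using lam0 mult_left_cancel[of lam] by simp
  then have "LM I x - LS I x = 1 / real d" using d2 by (simp add: field_simps)
  then have LMLS: "LM I x = LS I x + 1 / real d" by simp
  have X1: "Y + C = (1+a)^m * ((1+a) * y 0 + z 0)" using X[of m] Cz Y_def by simp
  have z0pos: "0 < z 0"
  proof -
    have "C = (1+a+s)^m * z 0" using zc[of m] Cz by simp
    then have "z 0 \<noteq> 0" using Cpos by auto
    then show ?thesis using zn[of 0] by simp
  qed
  have qp: "0 < (1+a)^m" using a0 by simp
  have b1: "(1+a)^m * (1 - lam) \<le> 1"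
  proof -
    have "(1+a)^m * (1 - lam) = (1+a)^m * (y 0 + z 0)" using S0 by simp
    also have "\<dots> \<le> (1+a)^m * ((1+a) * y 0 + z 0)"
      using qp a0 yn[of 0] by (intro mult_left_mono) (auto simp: algebra_simps)
    finally show ?thesis using X1 tot by simp
  qed
  have b2: "1 < (1+a)^Suc m * (1 - lam)"
  proof -
    have "(1+a)^Suc m * (1 - lam) = (1+a)^Suc m * (y 0 + z 0)" using S0 by simp
    also have "\<dots> = (1+a)^m * ((1+a) * y 0 + z 0) + (1+a)^m * (a * z 0)"
      by (simp add: algebra_simps)
    finally have "(1+a)^Suc m * (1 - lam) = (1+a)^m * ((1+a) * y 0 + z 0) + (1+a)^m * (a * z 0)" .
    moreover have "0 < (1+a)^m * (a * z 0)" using qp a0 z0pos by simp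
    ultimately show ?thesis using X1 tot by simp
  qed
  have Y0: "0 \<le> Y" unfolding Y_def by (rule sum_nonneg) (use yn in auto)
  have "real m * C + real (Suc m) * Y = real m * (C + Y) + Y" by (simp add: algebra_simps)
  then have LMm: "LM I x = real m + Y" using LMv tot by simp
  have Y1: "Y \<le> 1" using tot Cpos by simp
  show ?thesis using b1 b2 LMLS LMm Y0 Y1 unfolding a_def by (simp add: add.commute)
qed

end



theorem proposition2:
  fixes lam :: real and d I :: nat and x :: "nat \<Rightarrow> nat \<Rightarrow> real"
  assumes "0 < lam" and "lam < 1" and "2 \<le> d" and "1 < I"
    and "jstar lam d < int I"
    and "fixed_point lam d I x"
  shows "LM I x = LS I x + 1 / real d
         \<and> real_of_int (jstar lam d) - 1 / real d \<le> LS I x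
         \<and> LS I x \<le> real_of_int (jstar lam d) - 1 / real d + 1"
proof -
  interpret fp lam d I x
    by (rule fp.intro) (rule assms(1), rule assms(2), rule assms(3), rule assms(4), rule assms(6))
  have d0: "0 < d" using assms(3) by simp
  have mI: "m \<le> I" by (rule m_props(1))
  show ?thesis
  proof (cases "m = 0")
    case True
    have c: "LM I x = LS I x + 1 / real d \<and> LS I x = lam \<and> 1 < (lam * real d + 1) * (1 - lam)
      \<and> 1 / real d < 1 - lam" by (rule case0) (rule True)
    have "jstar lam d = int 0"
      by (rule jstar_eq) (use assms(1,2) d0 c in simp_all)
    moreover have "0 \<le> 1 / real d" by simp
    ultimately show ?thesis using c assms(1) by linarith
  next
    case False
    show ?thesis
    proof (cases "m = I")
      case True
      have "(lam * real d + 1) ^ I * (1 - lam) \<le> 1" by (rule caseI) (rule True)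
      then have "int I \<le> jstar lam d" by (rule jstar_ge[OF assms(1,2) d0])
      then show ?thesis using assms(5) by simp
    next
      case False2: False
      have m1: "1 \<le> m" using False by simp
      have m2: "m < I" using False2 mI by simp
      have c: "(lam * real d + 1) ^ m * (1 - lam) \<le> 1 \<and> 1 < (lam * real d + 1) ^ Suc m * (1 - lam)
        \<and> LM I x = LS I x + 1 / real d \<and> real m - 1 / real d \<le> LS I x
        \<and> LS I x \<le> real m - 1 / real d + 1" by (rule caseG[OF m1 m2])
      have "jstar lam d = int m"
        by (rule jstar_eq) (use assms(1,2) d0 c in simp_all)
      then show ?thesis using c by simp
    qed
  qed
qed


end
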